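(* Consider the 2-Opt heuristic: start with an arbitrary tour $T$; while there exists an improving 2-change in $T$, perform an improving 2-change; output $T$. For every metric TSP instance with $n\ge 3$ cities, every tour that the 2-Opt heuristic can output (for any starting tour and any choice of improving 2-changes) has length at most $\sqrt{n/2}$ times the length of a shortest tour. Moreover, for every positive integer $k$ and $n=2k^2$ there exists a metric TSP instance with $n$ cities and a starting tour for which the 2-Opt heuristic outputs a tour of length exactly $\sqrt{n/2}$ times the length of a shortest tour (which is positive). In this sense the approximation ratio of the 2-Opt heuristic on metric TSP is $\sqrt{n/2}$, and this is tight.
   Context: A metric TSP instance with $n$ cities consists of a complete undirected graph $G$ on $n$ vertices together with a distance function $c: E(G)\to\mathbb{R}_{\ge 0}$ satisfying the triangle inequality $c(x,y)+c(y,z)\ge c(x,z)$ for all vertices $x,y,z$. A tour is a cycle in $G$ containing all vertices; its length is $c(T)=\sum_{e\in E(T)}c(e)$. Tours are regarded as oriented cycles. For two edges $(a,b)$ and $(x,y)$ of an oriented tour, the 2-change replaces them by $(a,x)$ and $(b,y)$ (reversing the segment from $b$ to $x$), yielding a tour; it is improving if $c(a,x)+c(b,y) < c(a,b)+c(x,y)$. An algorithm has approximation ratio $\alpha(n)\ge 1$ if on every instance with $n$ vertices it finds a tour of length at most $\alpha(n)$ times the length of a shortest tour. *)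

theory Defs
  imports Complex_Main
begin

text \<open>Cities are the natural numbers 0,...,n-1. The distance function c is defined on
  edges, i.e. on pairs of distinct cities.\<close>

definition metric_tsp :: "nat \<Rightarrow> (nat \<Rightarrow> nat \<Rightarrow> real) \<Rightarrow> bool" where
  "metric_tsp n c \<longleftrightarrow>
     (\<forall>x<n. \<forall>y<n. x \<noteq> y \<longrightarrow> c x y = c y x \<and> 0 \<le> c x y) \<and>
     (\<forall>x<n. \<forall>y<n. \<forall>z<n. x \<noteq> y \<and> y \<noteq> z \<and> x \<noteq> z \<longrightarrow> c x z \<le> c x y + c y z)"

definition is_tour :: "nat \<Rightarrow> nat list \<Rightarrow> bool" where
  "is_tour n T \<longleftrightarrow> distinct T \<and> set T = {..<n}"

definition tour_length :: "(nat \<Rightarrow> nat \<Rightarrow> real) \<Rightarrow> nat list \<Rightarrow> real" where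
  "tour_length c T = (\<Sum>i<length T. c (T ! i) (T ! (Suc i mod length T)))"

definition opt_length :: "nat \<Rightarrow> (nat \<Rightarrow> nat \<Rightarrow> real) \<Rightarrow> real" where
  "opt_length n c = Min (tour_length c ` {T. is_tour n T})"

text \<open>The 2-change on edges (a,b) = (T!i, T!(i+1)) and (x,y) = (T!j, T!((j+1) mod n)),
  i < j, replacing them by (a,x) and (b,y) by reversing the segment from b to x.\<close>

definition two_change :: "nat list \<Rightarrow> nat \<Rightarrow> nat \<Rightarrow> nat list" where
  "two_change T i j = take (Suc i) T @ rev (drop (Suc i) (take (Suc j) T)) @ drop (Suc j) T"

definition improving_two_change ::
    "(nat \<Rightarrow> nat \<Rightarrow> real) \<Rightarrow> nat list \<Rightarrow> nat \<Rightarrow> nat \<Rightarrow> bool" where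
  "improving_two_change c T i j \<longleftrightarrow> i < j \<and> j < length T \<and>
     (let a = T ! i; b = T ! Suc i; x = T ! j; y = T ! (Suc j mod length T)
      in c a x + c b y < c a b + c x y)"

definition two_opt_step :: "(nat \<Rightarrow> nat \<Rightarrow> real) \<Rightarrow> nat list \<Rightarrow> nat list \<Rightarrow> bool" where
  "two_opt_step c T T' \<longleftrightarrow> (\<exists>i j. improving_two_change c T i j \<and> T' = two_change T i j)"

definition two_opt_output ::
    "(nat \<Rightarrow> nat \<Rightarrow> real) \<Rightarrow> nat list \<Rightarrow> nat list \<Rightarrow> bool" where
  "two_opt_output c T0 T \<longleftrightarrow> (two_opt_step c)\<^sup>*\<^sup>* T0 T \<and> \<not> (\<exists>T'. two_opt_step c T T')"

end

theory Submission
  imports Defs "HOL-Analysis.Analysis"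
begin
definition circ :: "real \<Rightarrow> real \<Rightarrow> real \<Rightarrow> real" where
  "circ L s t = min \<bar>s - t\<bar> (L - \<bar>s - t\<bar>)"

lemma circ_sym: "circ L s t = circ L t s"
  unfolding circ_def by (simp add: abs_minus_commute)

lemma circ_le_half: "circ L s t \<le> L / 2"
  unfolding circ_def by linarith

lemma circ_nonneg: "s \<in> {0..L} \<Longrightarrow> t \<in> {0..L} \<Longrightarrow> 0 \<le> circ L s t"
  unfolding circ_def by auto

lemma circ_le_abs: "circ L s t \<le> \<bar>s - t\<bar>"
  unfolding circ_def by linarith

lemma circ_le_wrap: "circ L s t \<le> L - \<bar>s - t\<bar>"
  unfolding circ_def by linarith

lemma circ_tri: "s \<in> {0..L} \<Longrightarrow> t \<in> {0..L} \<Longrightarrow> u \<in> {0..L} \<Longrightarrow>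
   circ L s u \<le> circ L s t + circ L t u"
  unfolding circ_def by (auto simp: min_def abs_if split: if_splits)

lemma one_dim:
  fixes E :: "'a set" and A h :: "'a \<Rightarrow> real"
  assumes fin: "finite E" and L: "0 \<le> L"
    and A: "\<And>e. e \<in> E \<Longrightarrow> A e \<in> {0..L}"
    and h: "\<And>e. e \<in> E \<Longrightarrow> 0 \<le> h e \<and> h e \<le> L / 2"
    and pair: "\<And>e f. e \<in> E \<Longrightarrow> f \<in> E \<Longrightarrow> e \<noteq> f \<Longrightarrow> 0 < h e \<Longrightarrow> 0 < h f \<Longrightarrow>
                 h e + h f \<le> circ L (A e) (A f)"
  shows "2 * (\<Sum>e\<in>E. h e) \<le> L"
proof -
  define E' where "E' = {e\<in>E. 0 < h e}"
  have finE': "finite E'" using fin by (simp add: E'_def)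
  have sumE: "(\<Sum>e\<in>E. h e) = (\<Sum>e\<in>E'. h e)"
    unfolding E'_def by (rule sum.mono_neutral_right) (use fin h in \<open>auto simp: order.order_iff_strict\<close>)
  have inj: "inj_on A E'"
  proof (rule inj_onI)
    fix e f assume "e \<in> E'" "f \<in> E'" "A e = A f"
    show "e = f"
    proof (rule ccontr)
      assume "e \<noteq> f"
      then have "h e + h f \<le> circ L (A e) (A f)" using pair \<open>e \<in> E'\<close> \<open>f \<in> E'\<close> by (auto simp: E'_def)
      moreover have "circ L (A e) (A f) = 0" using \<open>A e = A f\<close> L by (simp add: circ_def)
      ultimately show False using \<open>e \<in> E'\<close> \<open>f \<in> E'\<close> by (auto simp: E'_def)
    qed
  qed
  define V where "V = A ` E'"
  define H where "H x = h (inv_into E' A x)" for x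
  have finV: "finite V" using finE' by (simp add: V_def)
  have sumV: "(\<Sum>e\<in>E'. h e) = (\<Sum>x\<in>V. H x)"
    unfolding V_def H_def by (simp add: sum.reindex[OF inj] inv_into_f_f[OF inj])
  have Vin: "x \<in> V \<Longrightarrow> x \<in> {0..L}" for x using A by (auto simp: V_def E'_def)
  have Hpos: "x \<in> V \<Longrightarrow> 0 < H x \<and> H x \<le> L/2" for x
  proof -
    assume "x \<in> V"
    then obtain e where e: "e \<in> E'" "x = A e" by (auto simp: V_def)
    then have "H x = h e" by (simp add: H_def inv_into_f_f[OF inj])
    then show ?thesis using e h by (auto simp: E'_def)
  qed
  have Hpair: "x \<in> V \<Longrightarrow> y \<in> V \<Longrightarrow> x \<noteq> y \<Longrightarrow> H x + H y \<le> circ L x y" for x y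
  proof -
    assume "x \<in> V" "y \<in> V" "x \<noteq> y"
    then obtain e f where ef: "e \<in> E'" "f \<in> E'" "x = A e" "y = A f" by (auto simp: V_def)
    then have "e \<noteq> f" using \<open>x \<noteq> y\<close> by auto
    moreover have "H x = h e" "H y = h f" using ef by (simp_all add: H_def inv_into_f_f[OF inj])
    ultimately show ?thesis using pair ef by (auto simp: E'_def)
  qed
  define xs where "xs = sorted_list_of_set V"
  have xs: "set xs = V" "distinct xs" "sorted xs" using finV by (auto simp: xs_def)
  define m where "m = length xs"
  have sumxs: "(\<Sum>x\<in>V. H x) = (\<Sum>i<m. H (xs ! i))"
  proof -
    have "(\<Sum>x\<in>V. H x) = sum_list (map H xs)"
      using xs by (simp add: sum_list_distinct_conv_sum_set)
    also have "\<dots> = (\<Sum>i<m. H (xs ! i))"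
      by (simp add: m_def sum_list_sum_nth atLeast0LessThan)
    finally show ?thesis .
  qed
  have lt: "i < j \<Longrightarrow> j < m \<Longrightarrow> xs ! i < xs ! j" for i j
  proof -
    assume ij: "i < j" "j < m"
    have "xs ! i \<le> xs ! j" using xs(3) ij m_def by (simp add: sorted_nth_mono)
    moreover have "xs ! i \<noteq> xs ! j" using xs(2) ij m_def by (simp add: nth_eq_iff_index_eq)
    ultimately show ?thesis by simp
  qed
  consider "m = 0" | "m = 1" | k where "m = Suc (Suc k)"
    by (metis One_nat_def not0_implies_Suc)
  then have "2 * (\<Sum>i<m. H (xs ! i)) \<le> L"
  proof cases
    case 1 then show ?thesis using L by simp
  next
    case 2
    then have "xs ! 0 \<in> V" using xs m_def by (metis nth_mem zero_less_one)
    then have "H (xs ! 0) * 2 \<le> L" using Hpos by auto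
    then show ?thesis using 2 by simp
  next
    case 3
    have inV: "i < m \<Longrightarrow> xs ! i \<in> V" for i using xs m_def by auto
    have gap: "H (xs ! i) + H (xs ! Suc i) \<le> xs ! Suc i - xs ! i" if "i < Suc k" for i
    proof -
      have "xs ! i < xs ! Suc i" using lt that 3 by auto
      moreover have "H (xs ! i) + H (xs ! Suc i) \<le> circ L (xs ! i) (xs ! Suc i)"
        using Hpair inV that 3 calculation by auto
      ultimately show ?thesis using circ_le_abs[of L "xs ! i" "xs ! Suc i"] by auto
    qed
    have wrap: "H (xs ! Suc k) + H (xs ! 0) \<le> L - (xs ! Suc k - xs ! 0)"
    proof -
      have "xs ! 0 < xs ! Suc k" using lt 3 by auto
      moreover have "H (xs ! Suc k) + H (xs ! 0) \<le> circ L (xs ! Suc k) (xs ! 0)"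
        using Hpair inV 3 calculation by auto
      ultimately show ?thesis using circ_le_wrap[of L "xs ! Suc k" "xs ! 0"] by auto
    qed
    have "(\<Sum>i<Suc k. H (xs ! i) + H (xs ! Suc i)) \<le> (\<Sum>i<Suc k. xs ! Suc i - xs ! i)"
      by (rule sum_mono) (use gap in auto)
    also have "\<dots> = xs ! Suc k - xs ! 0" by (rule sum_lessThan_telescope)
    finally have s1: "(\<Sum>i<Suc k. H (xs ! i) + H (xs ! Suc i)) \<le> xs ! Suc k - xs ! 0" .
    have "2 * (\<Sum>i<m. H (xs ! i)) = (\<Sum>i<Suc k. H (xs ! i) + H (xs ! Suc i)) + (H (xs ! Suc k) + H (xs ! 0))"
    proof -
      have a: "(\<Sum>i<m. H (xs ! i)) = (\<Sum>i<Suc k. H (xs ! i)) + H (xs ! Suc k)"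
        unfolding 3 by (rule sum.lessThan_Suc)
      have b: "(\<Sum>i<m. H (xs ! i)) = H (xs ! 0) + (\<Sum>i<Suc k. H (xs ! Suc i))"
        unfolding 3 by (rule sum.lessThan_Suc_shift)
      show ?thesis using a b by (simp add: sum.distrib)
    qed
    then show ?thesis using s1 wrap by linarith
  qed
  then show ?thesis using sumE sumV sumxs by simp
qed

definition tent :: "real \<Rightarrow> real \<Rightarrow> real" where
  "tent r y = max 0 (r - \<bar>y\<bar>)"

definition clamp :: "real \<Rightarrow> real \<Rightarrow> real" where
  "clamp r y = max (- r) (min r y)"

definition Hant :: "real \<Rightarrow> real \<Rightarrow> real" where
  "Hant r y = r * clamp r y + r\<^sup>2 / 2 - clamp r y * \<bar>clamp r y\<bar> / 2"

lemma Hant_cont: "continuous_on S (Hant r)"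
  unfolding Hant_def clamp_def by (intro continuous_intros) auto

lemma Hant_deriv:
  assumes r: "0 \<le> r" and y: "y \<notin> {-r, 0, r}"
  shows "(Hant r has_field_derivative tent r y) (at y)"
proof (cases "r = 0")
  case True
  then have "Hant r = (\<lambda>_. 0)" by (auto simp: Hant_def clamp_def fun_eq_iff)
  then show ?thesis using True by (simp add: tent_def)
next
  case False
  with r have r: "0 < r" by simp
  consider "y < -r" | "-r < y \<and> y < 0" | "0 < y \<and> y < r" | "r < y" using y by force
  then show ?thesis
  proof cases
    case 1
    have "((\<lambda>_. 0) has_field_derivative 0) (at y)" by simp
    then show ?thesis
      by (rule has_field_derivative_transform_within_open[where S="{..< -r}", THEN DERIV_cong])
         (use 1 r in \<open>auto simp: Hant_def clamp_def tent_def power2_eq_square\<close>)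
  next
    case 2
    have "((\<lambda>y. r * y + r\<^sup>2 / 2 + y * y / 2) has_field_derivative (r + y)) (at y)"
      by (auto intro!: derivative_eq_intros)
    then show ?thesis
      by (rule has_field_derivative_transform_within_open[where S="{-r <..< 0}", THEN DERIV_cong])
         (use 2 r in \<open>auto simp: Hant_def clamp_def tent_def\<close>)
  next
    case 3
    have "((\<lambda>y. r * y + r\<^sup>2 / 2 - y * y / 2) has_field_derivative (r - y)) (at y)"
      by (auto intro!: derivative_eq_intros)
    then show ?thesis
      by (rule has_field_derivative_transform_within_open[where S="{0 <..< r}", THEN DERIV_cong])
         (use 3 r in \<open>auto simp: Hant_def clamp_def tent_def\<close>)
  next
    case 4
    have "((\<lambda>_. r\<^sup>2) has_field_derivative 0) (at y)" by simp
    then show ?thesis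
      by (rule has_field_derivative_transform_within_open[where S="{r <..}", THEN DERIV_cong])
         (use 4 r in \<open>auto simp: Hant_def clamp_def tent_def power2_eq_square\<close>)
  qed
qed

definition tent3 :: "real \<Rightarrow> real \<Rightarrow> real \<Rightarrow> real \<Rightarrow> real" where
  "tent3 L r b t = tent r (t - b + L) + tent r (t - b) + tent r (t - b - L)"

lemma tent3_integral:
  assumes b: "b \<in> {0..L}" and r: "0 \<le> r" "2 * r \<le> L"
  shows "(tent3 L r b has_integral r\<^sup>2) {0..L}"
proof -
  define G where "G t = Hant r (t - b + L) + Hant r (t - b) + Hant r (t - b - L)" for t
  define S where "S = (\<lambda>(c, d). c + d) ` ({b - L, b, b + L} \<times> {-r, 0, r})"
  have finS: "finite S" by (simp add: S_def)
  have "(tent3 L r b has_integral (G L - G 0)) {0..L}"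
  proof (rule fundamental_theorem_of_calculus_interior_strong[OF finS])
    show "0 \<le> L" using r by simp
    show "continuous_on {0..L} G" unfolding G_def
      by (intro continuous_intros continuous_on_compose2[OF Hant_cont]) auto
    fix x assume x: "x \<in> {0<..<L} - S"
    have d: "((\<lambda>t. Hant r (t + c)) has_field_derivative tent r (x + c)) (at x)"
      if "x + c \<notin> {-r, 0, r}" for c
      using Hant_deriv[OF r(1) that] DERIV_shift by blast
    have n1: "x + (- b + L) \<notin> {-r, 0, r}" using x by (force simp: S_def)
    have n2: "x + (- b) \<notin> {-r, 0, r}" using x by (force simp: S_def)
    have n3: "x + (- b - L) \<notin> {-r, 0, r}" using x by (force simp: S_def)
    have "(G has_field_derivative tent3 L r b x) (at x)"
      unfolding G_def tent3_def
      using DERIV_add[OF DERIV_add[OF d[OF n1] d[OF n2]] d[OF n3]]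
      by (simp add: algebra_simps)
    then show "(G has_vector_derivative tent3 L r b x) (at x)"
      by (simp add: has_real_derivative_iff_has_vector_derivative)
  qed
  moreover have "G L - G 0 = r\<^sup>2"
  proof -
    have "Hant r (L - b + L) = r\<^sup>2" using b r
      by (simp add: Hant_def clamp_def power2_eq_square)
    moreover have "Hant r (0 - b - L) = 0" using b r
      by (simp add: Hant_def clamp_def power2_eq_square)
    ultimately show ?thesis by (simp add: G_def)
  qed
  ultimately show ?thesis by simp
qed

lemma tent3_le:
  assumes t: "t \<in> {0..L}" and b: "b \<in> {0..L}" and r: "0 \<le> r" "2 * r \<le> L"
  shows "tent3 L r b t \<le> max 0 (r - circ L t b)"
  using assms unfolding tent3_def tent_def circ_def
  by (auto simp: max_def min_def abs_if split: if_splits)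

lemma packing:
  fixes E :: "'a set" and A B r :: "'a \<Rightarrow> real"
  assumes fin: "finite E" and L: "0 \<le> L"
    and A: "\<And>e. e \<in> E \<Longrightarrow> A e \<in> {0..L}"
    and B: "\<And>e. e \<in> E \<Longrightarrow> B e \<in> {0..L}"
    and r: "\<And>e. e \<in> E \<Longrightarrow> 0 \<le> r e \<and> 2 * r e \<le> L"
    and pair: "\<And>e f. e \<in> E \<Longrightarrow> f \<in> E \<Longrightarrow> e \<noteq> f \<Longrightarrow>
                 r e + r f \<le> circ L (A e) (A f) + circ L (B e) (B f)"
  shows "2 * (\<Sum>e\<in>E. (r e)\<^sup>2) \<le> L\<^sup>2"
proof -
  define F where "F e t = max 0 (r e - circ L t (B e))" for e t
  have point: "(\<Sum>e\<in>E. F e t) \<le> L / 2" if t: "t \<in> {0..L}" for t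
  proof -
    have "2 * (\<Sum>e\<in>E. F e t) \<le> L"
    proof (rule one_dim[OF fin L A])
      fix e assume e: "e \<in> E"
      have "0 \<le> circ L t (B e)" using circ_nonneg t B e by blast
      then show "0 \<le> F e t \<and> F e t \<le> L / 2" using r[OF e] L by (auto simp: F_def max_def)
    next
      fix e f assume ef: "e \<in> E" "f \<in> E" "e \<noteq> f" "0 < F e t" "0 < F f t"
      have tri: "circ L (B e) (B f) \<le> circ L t (B e) + circ L t (B f)"
        using circ_tri[OF B[OF ef(1)] t B[OF ef(2)]] circ_sym[of L t "B e"] by simp
      show "F e t + F f t \<le> circ L (A e) (A f)"
        using ef(4,5) tri pair[OF ef(1-3)] unfolding F_def by auto
    qed (auto)
    then show ?thesis by simp
  qed
  have cont: "continuous_on {0..L} (F e)" for e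
    unfolding F_def circ_def by (intro continuous_intros)
  have int: "(F e has_integral integral {0..L} (F e)) {0..L}" for e
    using integrable_continuous_real[OF cont] by (simp add: integrable_integral)
  have low: "(r e)\<^sup>2 \<le> integral {0..L} (F e)" if e: "e \<in> E" for e
  proof (rule has_integral_le[OF tent3_integral int])
    show "B e \<in> {0..L}" using B e .
    show "0 \<le> r e" "2 * r e \<le> L" using r e by auto
    fix t assume "t \<in> {0..L}"
    then show "tent3 L (r e) (B e) t \<le> F e t"
      unfolding F_def using tent3_le B e r e by auto
  qed
  have "(\<Sum>e\<in>E. integral {0..L} (F e)) \<le> Henstock_Kurzweil_Integration.content {0..L} *\<^sub>R (L / 2)"
  proof (rule has_integral_le[OF has_integral_sum[OF fin] has_integral_const_real])
    show "\<And>e. e \<in> E \<Longrightarrow> (F e has_integral integral {0..L} (F e)) {0..L}" using int by blast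
    show "\<And>x. x \<in> {0..L} \<Longrightarrow> (\<Sum>e\<in>E. F e x) \<le> L / 2" using point by blast
  qed
  moreover have "(\<Sum>e\<in>E. (r e)\<^sup>2) \<le> (\<Sum>e\<in>E. integral {0..L} (F e))"
    by (rule sum_mono) (use low in auto)
  ultimately show ?thesis using L by (simp add: power2_eq_square)
qed

lemma two_change_decomp:
  assumes "i < j" "j < length T"
  shows "T = take (Suc i) T @ drop (Suc i) (take (Suc j) T) @ drop (Suc j) T"
proof -
  have "take (Suc i) T = take (Suc i) (take (Suc j) T)" using assms by (simp add: min_def)
  then have "take (Suc i) T @ drop (Suc i) (take (Suc j) T) = take (Suc j) T"
    by (metis append_take_drop_id)
  then show ?thesis by (metis append.assoc append_take_drop_id)
qed

lemma two_change_tour: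
  assumes "is_tour n T" "i < j" "j < length T"
  shows "is_tour n (two_change T i j)" "length (two_change T i j) = length T"
proof -
  note d = two_change_decomp[OF assms(2,3)]
  have "distinct T" "set T = {..<n}" using assms(1) by (auto simp: is_tour_def)
  then have "distinct (take (Suc i) T @ drop (Suc i) (take (Suc j) T) @ drop (Suc j) T)"
    "set (take (Suc i) T @ drop (Suc i) (take (Suc j) T) @ drop (Suc j) T) = {..<n}"
    using d by simp_all
  then show "is_tour n (two_change T i j)"
    unfolding is_tour_def two_change_def by auto
  have "length (take (Suc i) T @ drop (Suc i) (take (Suc j) T) @ drop (Suc j) T) = length T"
    using d by (metis)
  then show "length (two_change T i j) = length T" unfolding two_change_def by simp
qed

lemma step_tour: "two_opt_step c T T' \<Longrightarrow> is_tour n T \<Longrightarrow> is_tour n T'"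
  unfolding two_opt_step_def improving_two_change_def using two_change_tour by blast

lemma reach_tour: "(two_opt_step c)\<^sup>*\<^sup>* T0 T \<Longrightarrow> is_tour n T0 \<Longrightarrow> is_tour n T"
  by (induction rule: rtranclp_induct) (auto intro: step_tour)

lemma tour_length_n: "is_tour n T \<Longrightarrow> length T = n"
  unfolding is_tour_def by (metis card_lessThan distinct_card)

lemma output_opt:
  assumes "two_opt_output c T0 T" "i < j" "j < length T"
  shows "c (T ! i) (T ! Suc i) + c (T ! j) (T ! (Suc j mod length T))
         \<le> c (T ! i) (T ! j) + c (T ! Suc i) (T ! (Suc j mod length T))"
proof -
  have "\<not> improving_two_change c T i j"
    using assms(1) unfolding two_opt_output_def two_opt_step_def by blast
  then show ?thesis using assms(2,3) unfolding improving_two_change_def Let_def by simp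
qed

lemma mod_neq:
  fixes a b n :: nat
  assumes "a < b" "b < a + n"
  shows "a mod n \<noteq> b mod n"
proof
  assume "a mod n = b mod n"
  then have "b mod n = a mod n" by simp
  then have "n dvd (b - a)" using assms(1) mod_eq_dvd_iff_nat[of a b n] by simp
  moreover have "0 < b - a" "b - a < n" using assms by auto
  ultimately show False by (simp add: nat_dvd_not_less)
qed

locale tourS =
  fixes n :: nat and c :: "nat \<Rightarrow> nat \<Rightarrow> real" and S :: "nat list"
  assumes n: "3 \<le> n" and met: "metric_tsp n c" and S: "is_tour n S"
begin

definition w where "w m = S ! (m mod n)"
definition e where "e m = c (w m) (w (Suc m))"
definition Q where "Q i = (\<Sum>m<i. e m)"
definition L where "L = tour_length c S"

lemma lenS: "length S = n" using tour_length_n[OF S] .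
lemma distS: "distinct S" using S by (simp add: is_tour_def)

lemma w_lt: "w m < n"
proof -
  have "m mod n < n" using n by simp
  then have "S ! (m mod n) \<in> set S" using lenS by simp
  then show ?thesis using S by (simp add: is_tour_def w_def)
qed

lemma w_neq: "a < b \<Longrightarrow> b < a + n \<Longrightarrow> w a \<noteq> w b"
  unfolding w_def using mod_neq distS lenS n by (simp add: nth_eq_iff_index_eq)

lemma sym: "x < n \<Longrightarrow> y < n \<Longrightarrow> x \<noteq> y \<Longrightarrow> c x y = c y x"
  using met by (simp add: metric_tsp_def)
lemma nonneg: "x < n \<Longrightarrow> y < n \<Longrightarrow> x \<noteq> y \<Longrightarrow> 0 \<le> c x y"
  using met by (simp add: metric_tsp_def)
lemma tri: "x < n \<Longrightarrow> y < n \<Longrightarrow> z < n \<Longrightarrow> x \<noteq> y \<Longrightarrow> y \<noteq> z \<Longrightarrow> x \<noteq> z \<Longrightarrow> c x z \<le> c x y + c y z"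
  using met by (simp add: metric_tsp_def)

lemma e_nonneg: "0 \<le> e m"
  unfolding e_def using nonneg w_lt w_neq[of m "Suc m"] n by simp

lemma e_per: "e (n + m) = e m"
proof -
  have "Suc (n + m) mod n = Suc m mod n" by (metis add_Suc_right mod_add_self1)
  then show ?thesis unfolding e_def w_def by simp
qed

lemma L_Q: "L = Q n"
  unfolding L_def Q_def tour_length_def lenS e_def w_def by simp

lemma Q_per: "Q (n + i) = L + Q i"
  by (induction i) (simp_all add: L_Q Q_def e_per[simplified add.commute] add.commute)

lemma Q_mono: "i \<le> j \<Longrightarrow> Q i \<le> Q j"
  unfolding Q_def by (rule sum_mono2) (auto simp: e_nonneg)

lemma Q_range: "i \<le> n \<Longrightarrow> Q i \<in> {0..L}"
  using Q_mono[of 0 i] Q_mono[of i n] by (simp add: L_Q Q_def)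

lemma path: "i < j \<Longrightarrow> j < i + n \<Longrightarrow> c (w i) (w j) \<le> Q j - Q i"
proof (induction j)
  case 0 then show ?case by simp
next
  case (Suc j)
  show ?case
  proof (cases "j = i")
    case True then show ?thesis by (simp add: Q_def e_def)
  next
    case False
    then have ij: "i < j" using Suc.prems by simp
    have "c (w i) (w (Suc j)) \<le> c (w i) (w j) + c (w j) (w (Suc j))"
      using tri[OF w_lt w_lt w_lt] w_neq[of i j] w_neq[of j "Suc j"] w_neq[of i "Suc j"] ij Suc.prems n
      by simp
    also have "\<dots> \<le> (Q j - Q i) + e j" using Suc.IH ij Suc.prems by (simp add: e_def)
    finally show ?thesis by (simp add: Q_def)
  qed
qed

definition ix where "ix v = inv_into {..<n} (\<lambda>i. S ! i) v"
definition pos where "pos v = Q (ix v)"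

lemma ix: "v < n \<Longrightarrow> ix v < n \<and> S ! ix v = v"
proof -
  assume v: "v < n"
  have "v \<in> set S" using S v by (simp add: is_tour_def)
  then obtain i where "i < length S" "S ! i = v" by (auto simp: in_set_conv_nth)
  then have "v \<in> (\<lambda>i. S ! i) ` {..<n}" using lenS by force
  then show ?thesis unfolding ix_def
    using inv_into_into[of v "\<lambda>i. S ! i" "{..<n}"] f_inv_into_f[of v "\<lambda>i. S ! i" "{..<n}"] by simp
qed

lemma pos_range: "v < n \<Longrightarrow> pos v \<in> {0..L}"
  using ix Q_range unfolding pos_def by (simp add: less_imp_le)

lemma wS: "i < n \<Longrightarrow> w i = S ! i" by (simp add: w_def)

lemma c_circ_aux:
  assumes ij: "i < j" "j < n"
  shows "c (S ! i) (S ! j) \<le> circ L (Q i) (Q j)"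
proof -
  have 1: "c (S ! i) (S ! j) \<le> Q j - Q i" using path[of i j] ij wS by simp
  have "c (w j) (w (n + i)) \<le> Q (n + i) - Q j" using path[of j "n + i"] ij by simp
  moreover have "w (n + i) = S ! i" using ij by (simp add: w_def)
  ultimately have "c (S ! j) (S ! i) \<le> L + Q i - Q j" using wS ij Q_per by simp
  moreover have "c (S ! j) (S ! i) = c (S ! i) (S ! j)"
    using sym lenS distS ij nth_mem S by (metis (no_types, lifting) dual_order.strict_trans is_tour_def
        lessThan_iff nth_eq_iff_index_eq order_less_irrefl)
  ultimately have 2: "c (S ! i) (S ! j) \<le> L - (Q j - Q i)" by simp
  have "Q i \<le> Q j" using Q_mono ij by simp
  then show ?thesis using 1 2 unfolding circ_def by (simp add: abs_if)
qed

lemma c_circ: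
  assumes "u < n" "v < n" "u \<noteq> v"
  shows "c u v \<le> circ L (pos u) (pos v)"
proof -
  obtain i j where i: "i < n" "S ! i = u" and j: "j < n" "S ! j = v"
    and pi: "pos u = Q i" and pj: "pos v = Q j"
    using ix assms unfolding pos_def by blast
  have "i \<noteq> j" using i j assms by auto
  then consider "i < j" | "j < i" by linarith
  then show ?thesis
  proof cases
    case 1 then show ?thesis using c_circ_aux[of i j] i j pi pj by simp
  next
    case 2
    then have "c v u \<le> circ L (pos v) (pos u)" using c_circ_aux[of j i] i j pi pj by simp
    then show ?thesis using sym assms circ_sym by metis
  qed
qed

end

lemma upper:
  assumes n: "3 \<le> n" and met: "metric_tsp n c" and T: "is_tour n T" and S: "is_tour n S"
    and opt: "\<And>i j. i < j \<Longrightarrow> j < n \<Longrightarrow>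
       c (T ! i) (T ! Suc i) + c (T ! j) (T ! (Suc j mod n))
         \<le> c (T ! i) (T ! j) + c (T ! Suc i) (T ! (Suc j mod n))"
  shows "tour_length c T \<le> sqrt (real n / 2) * tour_length c S"
proof -
  interpret tourS n c S using n met S by unfold_locales
  have lenT: "length T = n" using tour_length_n[OF T] .
  have distT: "distinct T" using T by (simp add: is_tour_def)
  have Tlt: "i < n \<Longrightarrow> T ! i < n" for i
  proof -
    assume "i < n"
    then have "T ! i \<in> set T" using lenT by (metis nth_mem)
    then show ?thesis using T unfolding is_tour_def by blast
  qed
  have Tneq: "i < n \<Longrightarrow> j < n \<Longrightarrow> i \<noteq> j \<Longrightarrow> T ! i \<noteq> T ! j" for i j
    using distT lenT by (simp add: nth_eq_iff_index_eq)
  define A where "A e = pos (T ! e)" for e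
  define B where "B e = pos (T ! (Suc e mod n))" for e
  define r where "r e = c (T ! e) (T ! (Suc e mod n))" for e
  have n0: "0 < n" using n by simp
  have sucmod: "e < n \<Longrightarrow> Suc e mod n < n" for e using n0 by simp
  have sucneq: "e < n \<Longrightarrow> Suc e mod n \<noteq> e" for e
  proof -
    assume e: "e < n"
    show ?thesis
    proof (cases "Suc e < n")
      case True then show ?thesis by simp
    next
      case False then have "Suc e = n" using e by simp
      then show ?thesis using n by auto
    qed
  qed
  have L0: "0 \<le> L" using Q_range[of 0] by simp
  have pair1: "r e + r f \<le> circ L (A e) (A f) + circ L (B e) (B f)" if ef: "e < f" "f < n" for e f
  proof -
    have se: "Suc e mod n = Suc e" using ef by simp
    have "r e + r f \<le> c (T ! e) (T ! f) + c (T ! Suc e) (T ! (Suc f mod n))"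
      using opt[OF ef] se unfolding r_def by simp
    also have "c (T ! e) (T ! f) \<le> circ L (A e) (A f)"
      unfolding A_def by (rule c_circ) (use Tlt Tneq ef in auto)
    also have "c (T ! Suc e) (T ! (Suc f mod n)) \<le> circ L (B e) (B f)"
    proof -
      have "Suc e \<noteq> Suc f mod n"
      proof (cases "Suc f < n")
        case True then show ?thesis using ef by simp
      next
        case False then have "Suc f = n" using ef by simp
        then show ?thesis by simp
      qed
      then have "c (T ! Suc e) (T ! (Suc f mod n)) \<le> circ L (pos (T ! Suc e)) (pos (T ! (Suc f mod n)))"
        by (intro c_circ) (use Tlt Tneq ef sucmod in auto)
      then show ?thesis unfolding B_def se .
    qed
    finally show ?thesis by simp
  qed
  have pack: "2 * (\<Sum>e\<in>{..<n}. (r e)\<^sup>2) \<le> L\<^sup>2"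
  proof (rule packing[OF _ L0])
    show "finite {..<n}" by simp
    show "\<And>e. e \<in> {..<n} \<Longrightarrow> A e \<in> {0..L}" unfolding A_def using pos_range Tlt by auto
    show "\<And>e. e \<in> {..<n} \<Longrightarrow> B e \<in> {0..L}" unfolding B_def using pos_range Tlt sucmod by auto
    show "\<And>e. e \<in> {..<n} \<Longrightarrow> 0 \<le> r e \<and> 2 * r e \<le> L"
    proof -
      fix e assume e: "e \<in> {..<n}"
      have ne: "T ! e \<noteq> T ! (Suc e mod n)" using Tneq[of e "Suc e mod n"] sucmod[of e] sucneq[of e] e by auto
      have l1: "T ! e < n" "T ! (Suc e mod n) < n" using Tlt sucmod e by auto
      have "r e \<le> circ L (A e) (B e)" unfolding r_def A_def B_def
        by (rule c_circ) (use ne l1 in auto)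
      moreover have "0 \<le> r e" unfolding r_def
        by (rule nonneg) (use ne l1 in auto)
      ultimately show "0 \<le> r e \<and> 2 * r e \<le> L" using circ_le_half[of L "A e" "B e"] by simp
    qed
    fix e f assume "e \<in> {..<n}" "f \<in> {..<n}" "e \<noteq> f"
    then consider "e < f" "f < n" | "f < e" "e < n" by fastforce
    then show "r e + r f \<le> circ L (A e) (A f) + circ L (B e) (B f)"
    proof cases
      case 1 then show ?thesis using pair1 by blast
    next
      case 2 then show ?thesis using pair1[of f e] circ_sym by (simp add: add.commute)
    qed
  qed
  have TL: "tour_length c T = (\<Sum>e\<in>{..<n}. r e)"
    unfolding tour_length_def r_def lenT by simp
  have "(\<Sum>e\<in>{..<n}. r e)\<^sup>2 \<le> (\<Sum>e\<in>{..<n}. (r e)\<^sup>2) * card {..<n}"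
    by (rule sum_squared_le_sum_of_squares)
  also have "\<dots> \<le> (L\<^sup>2 / 2) * real n"
  proof -
    have "(\<Sum>e\<in>{..<n}. (r e)\<^sup>2) \<le> L\<^sup>2 / 2" using pack by simp
    then have "(\<Sum>e\<in>{..<n}. (r e)\<^sup>2) * real n \<le> (L\<^sup>2 / 2) * real n"
      by (rule mult_right_mono) simp
    then show ?thesis by simp
  qed
  also have "\<dots> = (sqrt (real n / 2) * L)\<^sup>2"
    using L0 by (simp add: power_mult_distrib)
  finally have "(\<Sum>e\<in>{..<n}. r e)\<^sup>2 \<le> (sqrt (real n / 2) * L)\<^sup>2" .
  then have "(\<Sum>e\<in>{..<n}. r e) \<le> sqrt (real n / 2) * L"
    by (rule power2_le_imp_le) (use L0 in simp)
  then show ?thesis using TL L_def by simp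
qed

definition kcl :: "nat \<Rightarrow> nat \<Rightarrow> nat" where
  "kcl k t = (if even t then (t div 2) mod k else k + ((t div 2) mod k + (t div 2) div k) mod k)"

definition kc :: "nat \<Rightarrow> nat \<Rightarrow> nat \<Rightarrow> real" where
  "kc k u v = (if kcl k u = kcl k v then 0 else if (kcl k u < k) = (kcl k v < k) then 2 else 1)"

lemma kcl_side: "0 < k \<Longrightarrow> kcl k t < k \<longleftrightarrow> even t"
  unfolding kcl_def by auto

lemma kc_sym: "kc k u v = kc k v u" unfolding kc_def by auto
lemma kc_nonneg: "0 \<le> kc k u v" unfolding kc_def by auto
lemma kc_tri: "kc k x z \<le> kc k x y + kc k y z" unfolding kc_def by auto
lemma kc_ge1: "kcl k u \<noteq> kcl k v \<Longrightarrow> 1 \<le> kc k u v" unfolding kc_def by auto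

lemma kc_metric: "metric_tsp n (kc k)"
  unfolding metric_tsp_def using kc_sym kc_nonneg kc_tri by blast

lemma kc_diffside: "0 < k \<Longrightarrow> even u \<noteq> even v \<Longrightarrow> kc k u v = 1"
  using kcl_side[of k u] kcl_side[of k v] unfolding kc_def by auto

lemma kc_sameside: "0 < k \<Longrightarrow> even u = even v \<Longrightarrow> kc k u v = 0 \<or> kc k u v = 2"
  using kcl_side[of k u] kcl_side[of k v] unfolding kc_def by auto

lemma kc_zero: "kc k u v = 0 \<Longrightarrow> kcl k u = kcl k v"
  unfolding kc_def by (auto split: if_splits)

lemma suc_mod_parity:
  assumes "even n" "t < n"
  shows "even (Suc t mod n) \<longleftrightarrow> odd t"
proof (cases "Suc t < n")
  case True then show ?thesis by simp
next
  case False then have "Suc t = n" using assms by simp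
  then show ?thesis using assms by auto
qed

lemma mod_cancel_lt:
  fixes a q q' k :: nat
  assumes "(a + q) mod k = (a + q') mod k" "q < k" "q' < k"
  shows "q = q'"
proof -
  have "k dvd (a + q') - (a + q)" if "q \<le> q'" "(a + q) mod k = (a + q') mod k" for q q'
    using mod_eq_dvd_iff_nat[of "a + q" "a + q'" k] that by simp
  consider "q \<le> q'" | "q' \<le> q" by linarith
  then show ?thesis
  proof cases
    case 1
    then have "k dvd q' - q" using assms(1) mod_eq_dvd_iff_nat[of "a + q" "a + q'" k] by simp
    then show ?thesis using 1 assms by (metis diff_diff_cancel diff_is_0_eq diff_less_Suc dvd_imp_le
        le_add_diff_inverse less_Suc_eq_le less_imp_diff_less nat_less_le not_less)
  next
    case 2
    then have "k dvd q - q'" using assms(1) mod_eq_dvd_iff_nat[of "a + q'" "a + q" k] by simp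
    then show ?thesis using 2 assms by (metis diff_diff_cancel diff_is_0_eq diff_less_Suc dvd_imp_le
        le_add_diff_inverse less_Suc_eq_le less_imp_diff_less nat_less_le not_less)
  qed
qed

lemma kinj:
  fixes k m m' :: nat
  assumes k: "0 < k" and m: "m < k\<^sup>2" "m' < k\<^sup>2" and e1: "m mod k = m' mod k"
    and e2: "(m mod k + m div k) mod k = (m' mod k + m' div k) mod k"
  shows "m = m'"
proof -
  have "m div k < k" "m' div k < k" using m by (simp_all add: power2_eq_square less_mult_imp_div_less)
  then have "m div k = m' div k" using mod_cancel_lt[of "m mod k" "m div k" k "m' div k"] e1 e2 by simp
  then show ?thesis using e1 by (metis div_mod_decomp)
qed

context
  fixes k :: nat assumes k: "0 < k"
begin

abbreviation "nn \<equiv> 2 * k\<^sup>2"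

lemma nn_even: "even nn" by simp
lemma nn_pos: "2 \<le> nn" using k by (simp add: power2_eq_square)
lemma nn_mod: "x mod nn < nn" using nn_pos mod_less_divisor[of nn x] by linarith

lemma T0_tour: "is_tour nn [0..<nn]" by (simp add: is_tour_def atLeast0LessThan)

lemma T0_edge: "t < nn \<Longrightarrow> kc k t (Suc t mod nn) = 1"
  using kc_diffside[OF k] suc_mod_parity[OF nn_even] by blast

lemma T0_length: "tour_length (kc k) [0..<nn] = real nn"
proof -
  have "tour_length (kc k) [0..<nn] = (\<Sum>i<nn. kc k i (Suc i mod nn))"
    unfolding tour_length_def
    by (rule sum.cong) (auto simp: nth_upt nn_mod)
  also have "\<dots> = (\<Sum>i<nn. 1)" by (rule sum.cong) (auto simp: T0_edge)
  finally show ?thesis by simp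
qed

lemma no_imp:
  assumes ij: "i < j" "j < nn"
  shows "2 \<le> kc k i j + kc k (Suc i) (Suc j mod nn)"
proof (cases "even i = even j")
  case False
  have "kc k i j = 1" using kc_diffside[OF k] False by blast
  moreover have "kc k (Suc i) (Suc j mod nn) = 1"
    using kc_diffside[OF k] False suc_mod_parity[OF nn_even ij(2)] by simp
  ultimately show ?thesis by simp
next
  case True
  have s2: "even (Suc i) = even (Suc j mod nn)"
    using True suc_mod_parity[OF nn_even ij(2)] by simp
  have notboth: "\<not> (kcl k i = kcl k j \<and> kcl k (Suc i) = kcl k (Suc j mod nn))"
  proof
    assume eq: "kcl k i = kcl k j \<and> kcl k (Suc i) = kcl k (Suc j mod nn)"
    show False
    proof (cases "even i")
      case True
      then have ej: "even j" using \<open>even i = even j\<close> by simp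
      define m where "m = i div 2"
      define m' where "m' = j div 2"
      have im: "i = 2 * m" using True m_def by simp
      have jm: "j = 2 * m'" using ej m'_def by simp
      have "Suc j < nn" using ij ej nn_even by (metis Suc_lessI even_Suc)
      then have sj: "Suc j mod nn = Suc j" by simp
      have mm: "m < k\<^sup>2" "m' < k\<^sup>2" using ij im jm by auto
      have e0: "m mod k = m' mod k" using eq im jm unfolding kcl_def by simp
      have "kcl k (Suc i) = k + (m mod k + m div k) mod k" using im unfolding kcl_def by simp
      moreover have "kcl k (Suc j mod nn) = k + (m' mod k + m' div k) mod k" using jm sj unfolding kcl_def by simp
      ultimately have "(m mod k + m div k) mod k = (m' mod k + m' div k) mod k"
        using eq by simp
      then have "m = m'" using kinj[OF k mm e0] by blast
      then show False using ij im jm by simp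
    next
      case False
      then have oj: "odd j" using \<open>even i = even j\<close> by simp
      define m where "m = i div 2"
      define m' where "m' = j div 2"
      have im: "i = Suc (2 * m)" using False m_def by simp
      have jm: "j = Suc (2 * m')" using oj m'_def by simp
      have mm: "m < k\<^sup>2" "m' < k\<^sup>2" using ij im jm by auto
      have e1: "(m mod k + m div k) mod k = (m' mod k + m' div k) mod k"
        using eq im jm unfolding kcl_def by simp
      have c1: "kcl k (Suc i) = Suc m mod k" using im unfolding kcl_def by simp
      have c2: "kcl k (Suc j mod nn) = Suc m' mod k"
      proof (cases "Suc j < nn")
        case True then show ?thesis using jm unfolding kcl_def by simp
      next
        case False
        then have "Suc j = nn" using ij by simp
        then have "Suc m' = k * k" using jm by (simp add: power2_eq_square)
        then show ?thesis using \<open>Suc j = nn\<close> unfolding kcl_def by simp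
      qed
      have "Suc m mod k = Suc m' mod k" using eq c1 c2 by simp
      moreover have "m \<le> m'" using ij im jm by simp
      ultimately have "k dvd Suc m' - Suc m" using mod_eq_dvd_iff_nat[of "Suc m" "Suc m'" k] by simp
      then have "k dvd m' - m" by simp
      then have "m' mod k = m mod k" using mod_eq_dvd_iff_nat[of m m' k] \<open>m \<le> m'\<close> by simp
      then have "m mod k = m' mod k" by simp
      then have "m = m'" using kinj[OF k mm] e1 by blast
      then show False using ij im jm by simp
    qed
  qed
  have a: "kc k i j = 0 \<or> kc k i j = 2" using kc_sameside[OF k True] .
  have b: "kc k (Suc i) (Suc j mod nn) = 0 \<or> kc k (Suc i) (Suc j mod nn) = 2"
    using kc_sameside[OF k s2] .
  show ?thesis using a b notboth kc_zero by fastforce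
qed

lemma T0_no_step: "\<not> two_opt_step (kc k) [0..<nn] T'"
proof
  assume "two_opt_step (kc k) [0..<nn] T'"
  then obtain i j where imp: "improving_two_change (kc k) [0..<nn] i j"
    unfolding two_opt_step_def by blast
  then have ij: "i < j" "j < nn" unfolding improving_two_change_def by auto
  have si: "Suc i < nn" using ij by simp
  have "kc k i j + kc k (Suc i) (Suc j mod nn) < kc k i (Suc i) + kc k j (Suc j mod nn)"
    using imp ij si unfolding improving_two_change_def Let_def by (simp add: nth_upt nn_mod)
  moreover have "kc k i (Suc i) = 1" using T0_edge[of i] si by simp
  moreover have "kc k j (Suc j mod nn) = 1" using T0_edge ij by simp
  ultimately show False using no_imp[OF ij] by simp
qed

end

context
  fixes k :: nat assumes k: "0 < k"
begin

abbreviation "nn2 \<equiv> 2 * k\<^sup>2"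

lemma kcl_lt: "kcl k v < 2 * k"
proof -
  have a: "x mod k < 2 * k" for x using k mod_less_divisor[of k x] by linarith
  have b: "k + x mod k < 2 * k" for x using k mod_less_divisor[of k x] by linarith
  show ?thesis unfolding kcl_def using a b by simp
qed

lemma two_k_le: "2 * k \<le> nn2"
  using k by (simp add: power2_eq_square)

lemma cluster_ne: "p < 2 * k \<Longrightarrow> \<exists>v<nn2. kcl k v = p"
proof -
  assume p: "p < 2 * k"
  show ?thesis
  proof (cases "p < k")
    case True
    have "kcl k (2 * p) = p" using True unfolding kcl_def by simp
    moreover have "2 * p < nn2" using True two_k_le by linarith
    ultimately show ?thesis by blast
  next
    case False
    define q where "q = p - k"
    have q: "q < k" using p False q_def by simp
    have "kcl k (Suc (2 * q)) = p" using q False unfolding kcl_def q_def by simp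
    moreover have "Suc (2 * q) < nn2" using p two_k_le q_def False by linarith
    ultimately show ?thesis by blast
  qed
qed

lemma exit_ex:
  assumes T: "is_tour nn2 T" and p: "p < 2 * k"
  shows "\<exists>i<nn2. kcl k (T ! i) = p \<and> kcl k (T ! (Suc i mod nn2)) \<noteq> p"
proof (rule ccontr)
  assume H0: "\<not> ?thesis"
  have H: "i < nn2 \<Longrightarrow> kcl k (T ! i) = p \<Longrightarrow> kcl k (T ! (Suc i mod nn2)) = p" for i
    using H0 by blast
  have lenT: "length T = nn2" using tour_length_n[OF T] .
  have setT: "set T = {..<nn2}" using T by (simp add: is_tour_def)
  have nnpos: "0 < nn2" using k by simp
  have find: "v < nn2 \<Longrightarrow> \<exists>i<nn2. T ! i = v" for v
    using setT lenT by (metis in_set_conv_nth lessThan_iff)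
  obtain v where v: "v < nn2" "kcl k v = p" using cluster_ne[OF p] by blast
  obtain i0 where i0: "i0 < nn2" "T ! i0 = v" using find[OF v(1)] by blast
  have all: "kcl k (T ! ((i0 + m) mod nn2)) = p" for m
  proof (induction m)
    case 0 then show ?case using i0 v by simp
  next
    case (Suc m)
    have "(i0 + Suc m) mod nn2 = Suc ((i0 + m) mod nn2) mod nn2" by (simp add: mod_Suc_eq)
    then show ?case using H[OF _ Suc] nnpos by simp
  qed
  define q where "q = (if p = 0 then 1 else 0::nat)"
  have q: "q < 2 * k" "q \<noteq> p" using k by (auto simp: q_def)
  obtain v' where v': "v' < nn2" "kcl k v' = q" using cluster_ne[OF q(1)] by blast
  obtain j where j: "j < nn2" "T ! j = v'" using find[OF v'(1)] by blast
  have "(i0 + (nn2 + j - i0)) mod nn2 = j" using i0 j by simp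
  then have "kcl k (T ! j) = p" using all[of "nn2 + j - i0"] by simp
  then show False using j v' q by simp
qed

lemma lower:
  assumes T: "is_tour nn2 T"
  shows "real (2 * k) \<le> tour_length (kc k) T"
proof -
  have lenT: "length T = nn2" using tour_length_n[OF T] .
  obtain g where g: "\<And>p. p < 2 * k \<Longrightarrow> g p < nn2 \<and> kcl k (T ! g p) = p \<and> kcl k (T ! (Suc (g p) mod nn2)) \<noteq> p"
    using exit_ex[OF T] by metis
  have inj: "inj_on g {..<2 * k}"
    by (rule inj_onI) (metis g lessThan_iff)
  define f where "f i = kc k (T ! i) (T ! (Suc i mod nn2))" for i
  have "real (2 * k) = (\<Sum>i\<in>g ` {..<2 * k}. 1)"
    using card_image[OF inj] by simp
  also have "\<dots> \<le> (\<Sum>i\<in>g ` {..<2 * k}. f i)"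
    by (rule sum_mono) (auto simp: f_def intro!: kc_ge1 dest: g)
  also have "\<dots> \<le> (\<Sum>i<nn2. f i)"
    by (rule sum_mono2) (auto simp: f_def kc_nonneg dest: g)
  also have "\<dots> = tour_length (kc k) T"
    unfolding tour_length_def lenT f_def ..
  finally show ?thesis .
qed

end

definition key :: "nat \<Rightarrow> nat \<Rightarrow> nat" where
  "key k p = (if p < k then 2 * p else 2 * (p - k) + 1)"

context
  fixes k :: nat assumes k: "0 < k"
begin

abbreviation "N2 \<equiv> 2 * k\<^sup>2"

definition K where "K v = key k (kcl k v)"
definition SS where "SS = sort_key K [0..<N2]"

lemma K_lt: "K v < 2 * k"
  using kcl_lt[OF k, of v] unfolding K_def key_def by auto

lemma K_side: "kcl k v < k \<longleftrightarrow> even (K v)"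
  using kcl_lt[OF k, of v] unfolding K_def key_def by auto

lemma K_inj: "K u = K v \<Longrightarrow> kcl k u = kcl k v"
  using kcl_lt[OF k, of v] kcl_lt[OF k, of u] unfolding K_def key_def
  by (auto split: if_splits; presburger)

lemma K_diffpar: "even (K u) \<noteq> even (K v) \<Longrightarrow> kc k u v = 1"
  using K_side[of u] K_side[of v] unfolding kc_def by auto

lemma K_attained: "q < 2 * k \<Longrightarrow> \<exists>v<N2. K v = q"
proof -
  assume q: "q < 2 * k"
  define h where "h = q div 2"
  have h: "h < k" using q h_def by simp
  show ?thesis
  proof (cases "even q")
    case True
    have "kcl k (2 * h) = h" using h unfolding kcl_def by simp
    then have "K (2 * h) = q" using h True h_def unfolding K_def key_def by simp
    moreover have "2 * h < N2" using h two_k_le[OF k] by linarith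
    ultimately show ?thesis by blast
  next
    case False
    have "kcl k (Suc (2 * h)) = k + h" using h unfolding kcl_def by simp
    then have "K (Suc (2 * h)) = q" using h False h_def unfolding K_def key_def by simp
    moreover have "Suc (2 * h) < N2" using h two_k_le[OF k] by linarith
    ultimately show ?thesis by blast
  qed
qed

lemma SS_tour: "is_tour N2 SS"
  unfolding SS_def is_tour_def by (simp add: atLeast0LessThan)

lemma SS_len: "length SS = N2" unfolding SS_def by simp

lemma SS_sorted: "i \<le> j \<Longrightarrow> j < N2 \<Longrightarrow> K (SS ! i) \<le> K (SS ! j)"
proof -
  assume ij: "i \<le> j" "j < N2"
  have "sorted (map K SS)" unfolding SS_def by simp
  then have "(map K SS) ! i \<le> (map K SS) ! j" by (rule sorted_nth_mono) (use ij SS_len in auto)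
  then show ?thesis using ij SS_len by simp
qed

lemma SS_find: "v < N2 \<Longrightarrow> \<exists>p<N2. SS ! p = v"
  using SS_tour SS_len unfolding is_tour_def by (metis in_set_conv_nth lessThan_iff)

lemma SS_step: "Suc i < N2 \<Longrightarrow> K (SS ! Suc i) \<le> Suc (K (SS ! i))"
proof (rule ccontr)
  assume i: "Suc i < N2" and c: "\<not> K (SS ! Suc i) \<le> Suc (K (SS ! i))"
  have "Suc (K (SS ! i)) < 2 * k" using K_lt[of "SS ! Suc i"] c by linarith
  then obtain v where v: "v < N2" "K v = Suc (K (SS ! i))" using K_attained by blast
  obtain p where p: "p < N2" "SS ! p = v" using SS_find[OF v(1)] by blast
  show False
  proof (cases "p \<le> i")
    case True
    then have "K (SS ! p) \<le> K (SS ! i)" using SS_sorted i by simp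
    then show False using p v by simp
  next
    case False
    then have "K (SS ! Suc i) \<le> K (SS ! p)" using SS_sorted[of "Suc i" p] p by simp
    then show False using p v c by simp
  qed
qed

lemma SS_cost: "Suc i < N2 \<Longrightarrow> kc k (SS ! i) (SS ! Suc i) = real (K (SS ! Suc i)) - real (K (SS ! i))"
proof -
  assume i: "Suc i < N2"
  have le: "K (SS ! i) \<le> K (SS ! Suc i)" using SS_sorted i by simp
  have st: "K (SS ! Suc i) \<le> Suc (K (SS ! i))" using SS_step i .
  show ?thesis
  proof (cases "K (SS ! Suc i) = K (SS ! i)")
    case True
    then have "kcl k (SS ! i) = kcl k (SS ! Suc i)" using K_inj by metis
    then show ?thesis using True unfolding kc_def by simp
  next
    case False
    then have e: "K (SS ! Suc i) = Suc (K (SS ! i))" using le st by simp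
    then have "kc k (SS ! i) (SS ! Suc i) = 1" by (intro K_diffpar) simp
    then show ?thesis using e by simp
  qed
qed

lemma SS_first: "K (SS ! 0) = 0"
proof -
  obtain v where v: "v < N2" "K v = 0" using K_attained[of 0] k by auto
  obtain p where p: "p < N2" "SS ! p = v" using SS_find[OF v(1)] by blast
  show ?thesis using SS_sorted[of 0 p] p v by simp
qed

lemma SS_last: "K (SS ! (N2 - 1)) = 2 * k - 1"
proof -
  obtain v where v: "v < N2" "K v = 2 * k - 1" using K_attained k by (metis diff_less zero_less_one mult_pos_pos zero_less_numeral)
  obtain p where p: "p < N2" "SS ! p = v" using SS_find[OF v(1)] by blast
  have "K (SS ! p) \<le> K (SS ! (N2 - 1))" using SS_sorted[of p "N2 - 1"] p by simp
  moreover have "K (SS ! (N2 - 1)) < 2 * k" by (rule K_lt)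
  ultimately show ?thesis using p v by simp
qed

lemma SS_length: "tour_length (kc k) SS = real (2 * k)"
proof -
  obtain N where N: "N2 = Suc N" using k by (metis gr0_conv_Suc mult_pos_pos zero_less_numeral zero_less_power)
  have "tour_length (kc k) SS = (\<Sum>i<Suc N. kc k (SS ! i) (SS ! (Suc i mod Suc N)))"
    unfolding tour_length_def SS_len N ..
  also have "\<dots> = (\<Sum>i<N. kc k (SS ! i) (SS ! (Suc i mod Suc N))) + kc k (SS ! N) (SS ! 0)"
    by simp
  also have "(\<Sum>i<N. kc k (SS ! i) (SS ! (Suc i mod Suc N))) = (\<Sum>i<N. real (K (SS ! Suc i)) - real (K (SS ! i)))"
    by (rule sum.cong) (use SS_cost N in auto)
  also have "\<dots> = real (K (SS ! N)) - real (K (SS ! 0))"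
    by (rule sum_lessThan_telescope)
  also have "kc k (SS ! N) (SS ! 0) = 1"
    using SS_first SS_last N k by (intro K_diffpar) auto
  finally show ?thesis using SS_first SS_last N k by simp
qed

lemma opt_exact: "opt_length N2 (kc k) = real (2 * k)"
  unfolding opt_length_def
proof (rule Min_eqI)
  have "{T. is_tour N2 T} \<subseteq> {xs. set xs \<subseteq> {..<N2} \<and> length xs = N2}"
    using tour_length_n by (auto simp: is_tour_def)
  then have "finite {T. is_tour N2 T}"
    by (rule finite_subset) (rule finite_lists_length_eq, simp)
  then show "finite (tour_length (kc k) ` {T. is_tour N2 T})" by simp
  show "\<And>y. y \<in> tour_length (kc k) ` {T. is_tour N2 T} \<Longrightarrow> real (2 * k) \<le> y"
    using lower[OF k] by auto
  show "real (2 * k) \<in> tour_length (kc k) ` {T. is_tour N2 T}"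
    using SS_length SS_tour by (metis image_eqI mem_Collect_eq)
qed

end

lemma tours_finite: "finite {T. is_tour n T}"
proof -
  have "{T. is_tour n T} \<subseteq> {xs. set xs \<subseteq> {..<n} \<and> length xs = n}"
    using tour_length_n by (auto simp: is_tour_def)
  then show ?thesis
    by (rule finite_subset) (rule finite_lists_length_eq, simp)
qed

lemma opt_attained: "\<exists>S. is_tour n S \<and> opt_length n c = tour_length c S"
proof -
  have "[0..<n] \<in> {T. is_tour n T}" by (simp add: is_tour_def atLeast0LessThan)
  then have "opt_length n c \<in> tour_length c ` {T. is_tour n T}"
    unfolding opt_length_def using tours_finite by (intro Min_in) auto
  then show ?thesis by auto
qed

theorem mainTheorem2:
  shows "(\<forall>n c T0 T. 3 \<le> n \<longrightarrow> metric_tsp n c \<longrightarrow> is_tour n T0 \<longrightarrow> two_opt_output c T0 T \<longrightarrow>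
            tour_length c T \<le> sqrt (real n / 2) * opt_length n c)
       \<and> (\<forall>k::nat. 0 < k \<longrightarrow> (let n = 2 * k\<^sup>2 in
            \<exists>c T0. metric_tsp n c \<and> is_tour n T0 \<and> 0 < opt_length n c \<and>
              (\<exists>T. two_opt_output c T0 T) \<and>
              (\<forall>T. two_opt_output c T0 T \<longrightarrow>
                 tour_length c T = sqrt (real n / 2) * opt_length n c)))"
proof (intro conjI allI impI)
  fix n c T0 T
  assume n: "3 \<le> n" and met: "metric_tsp n c" and T0: "is_tour n T0" and out: "two_opt_output c T0 T"
  have T: "is_tour n T" using reach_tour out T0 unfolding two_opt_output_def by blast
  have lenT: "length T = n" using tour_length_n[OF T] .
  obtain S where S: "is_tour n S" "opt_length n c = tour_length c S" using opt_attained by blast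
  have "tour_length c T \<le> sqrt (real n / 2) * tour_length c S"
  proof (rule upper[OF n met T S(1)])
    fix i j assume "i < j" "j < n"
    then show "c (T ! i) (T ! Suc i) + c (T ! j) (T ! (Suc j mod n))
         \<le> c (T ! i) (T ! j) + c (T ! Suc i) (T ! (Suc j mod n))"
      using output_opt[OF out] lenT by simp
  qed
  then show "tour_length c T \<le> sqrt (real n / 2) * opt_length n c" using S by simp
next
  fix k :: nat assume k: "0 < k"
  have sq: "sqrt (real (2 * k\<^sup>2) / 2) = real k" by simp
  have opt: "opt_length (2 * k\<^sup>2) (kc k) = real (2 * k)" using opt_exact[OF k] .
  have out_eq: "two_opt_output (kc k) [0..<2 * k\<^sup>2] T \<longleftrightarrow> T = [0..<2 * k\<^sup>2]" for T
  proof
    assume "two_opt_output (kc k) [0..<2 * k\<^sup>2] T"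
    then have "(two_opt_step (kc k))\<^sup>*\<^sup>* [0..<2 * k\<^sup>2] T" unfolding two_opt_output_def by simp
    then show "T = [0..<2 * k\<^sup>2]"
      by (rule converse_rtranclpE) (use T0_no_step[OF k] in auto)
  next
    assume "T = [0..<2 * k\<^sup>2]"
    then show "two_opt_output (kc k) [0..<2 * k\<^sup>2] T"
      unfolding two_opt_output_def using T0_no_step[OF k] by auto
  qed
  show "let n = 2 * k\<^sup>2 in
            \<exists>c T0. metric_tsp n c \<and> is_tour n T0 \<and> 0 < opt_length n c \<and>
              (\<exists>T. two_opt_output c T0 T) \<and>
              (\<forall>T. two_opt_output c T0 T \<longrightarrow>
                 tour_length c T = sqrt (real n / 2) * opt_length n c)"
    unfolding Let_def
  proof (intro exI conjI allI impI)
    show "metric_tsp (2 * k\<^sup>2) (kc k)" by (rule kc_metric)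
    show "is_tour (2 * k\<^sup>2) [0..<2 * k\<^sup>2]" by (rule T0_tour[OF k])
    show "0 < opt_length (2 * k\<^sup>2) (kc k)" using opt k by simp
    show "two_opt_output (kc k) [0..<2 * k\<^sup>2] [0..<2 * k\<^sup>2]" using out_eq by simp
    fix T assume "two_opt_output (kc k) [0..<2 * k\<^sup>2] T"
    then have "T = [0..<2 * k\<^sup>2]" using out_eq by simp
    then have "tour_length (kc k) T = real (2 * k\<^sup>2)" using T0_length[OF k] by simp
    also have "\<dots> = sqrt (real (2 * k\<^sup>2) / 2) * opt_length (2 * k\<^sup>2) (kc k)"
      unfolding sq opt by (simp add: power2_eq_square)
    finally show "tour_length (kc k) T = sqrt (real (2 * k\<^sup>2) / 2) * opt_length (2 * k\<^sup>2) (kc k)" .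
  qed
qed

end
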